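(* Let $q$ be a prime power and $N,m,k,r$ positive integers with $m\le N$, $k\le m$, $r<k$. Let $\mathcal{C}\subseteq\mathbb{F}_{q^N}^m$ be an $[N\times m,\,Nk,\,m-k+1]$ Gabidulin MRD code, and assume either (Case 1) $m\equiv 0\pmod r$, or (Case 2) $m\equiv k\equiv j\pmod r$ for some $1\le j<r$. Partition the $m$ coordinates into $\lfloor m/r\rfloor$ disjoint groups $G_i$ of size $r$, together with (in Case 2 only) one additional group $\widehat{G}$ of size $j$. Define $C^{\mathrm{loc}}$ as the set of vectors obtained from each $\mathbf{c}\in\mathcal{C}$ by appending, for each group $G_i$, a parity symbol $p_i=\sum_{s\in G_i}c_s$, and (in Case 2) a parity symbol $\widehat{p}=\sum_{s\in\widehat{G}}c_s$. Let $n$ be the length of $C^{\mathrm{loc}}$ (so $n=m+m/r$ in Case 1 and $n=m+\lceil m/r\rceil$ in Case 2). Then $C^{\mathrm{loc}}$ is an $[n,k,d_{\min}]$ code over $\mathbb{F}_{q^N}$ with minimum Hamming distance $d_{\min}=n-k+2-\lceil k/r\rceil$.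
   Context: The Gabidulin code $\mathcal{C}$ with these parameters consists of the vectors $[f(g_1),\dots,f(g_m)]$, where $g_1,\dots,g_m\in\mathbb{F}_{q^N}$ are fixed and linearly independent over $\mathbb{F}_q$, and $f$ ranges over linearized polynomials $f(x)=\sum_{i=0}^{k-1}a_ix^{q^i}$ with $a_i\in\mathbb{F}_{q^N}$; its minimum rank distance is $m-k+1$. The code $C^{\mathrm{loc}}$ is regarded as a linear code over $\mathbb{F}_{q^N}$ with the Hamming metric. *)

theory Defs
  imports Complex_Main "HOL-Computational_Algebra.Primes" "HOL-Library.Cardinality"
begin

definition prime_power :: "nat \<Rightarrow> bool" where
  "prime_power q \<longleftrightarrow> (\<exists>p e. prime p \<and> e > 0 \<and> q = p ^ e)"

text \<open>The prime subfield-like copy of F_q inside F_{q^N}: elements fixed by Frobenius x -> x^q.\<close>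
definition base_field :: "nat \<Rightarrow> 'a::field set" where
  "base_field q = {x. x ^ q = x}"

definition lin_indep_over_Fq :: "nat \<Rightarrow> 'a::field list \<Rightarrow> bool" where
  "lin_indep_over_Fq q gs \<longleftrightarrow>
     (\<forall>c::nat \<Rightarrow> 'a. (\<forall>i<length gs. c i \<in> base_field q) \<and>
         (\<Sum>i<length gs. c i * gs ! i) = 0 \<longrightarrow> (\<forall>i<length gs. c i = 0))"

definition gabidulin :: "nat \<Rightarrow> nat \<Rightarrow> 'a::field list \<Rightarrow> 'a list set" where
  "gabidulin q k gs = {map (\<lambda>g. \<Sum>i<k. a i * g ^ (q ^ i)) gs | a. True}"

definition local_code :: "nat set list \<Rightarrow> 'a::field list set \<Rightarrow> 'a list set" where
  "local_code Gs C = {c @ map (\<lambda>G. \<Sum>s\<in>G. c ! s) Gs | c. c \<in> C}"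

definition lincomb :: "nat \<Rightarrow> (nat \<Rightarrow> 'a::field) \<Rightarrow> 'a list list \<Rightarrow> 'a list" where
  "lincomb n a B = map (\<lambda>t. \<Sum>i<length B. a i * (B ! i) ! t) [0..<n]"

definition linear_code_dim :: "nat \<Rightarrow> nat \<Rightarrow> 'a::field list set \<Rightarrow> bool" where
  "linear_code_dim n k C \<longleftrightarrow>
     (\<exists>B. length B = k \<and> (\<forall>b\<in>set B. length b = n) \<and>
          C = {lincomb n a B | a. True} \<and>
          (\<forall>a. lincomb n a B = replicate n 0 \<longrightarrow> (\<forall>i<k. a i = 0)))"

definition hamming_dist :: "'a list \<Rightarrow> 'a list \<Rightarrow> nat" where
  "hamming_dist x y = card {i. i < length x \<and> x ! i \<noteq> y ! i}"

definition min_dist :: "'a list set \<Rightarrow> nat" where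
  "min_dist C = Min {hamming_dist x y | x y. x \<in> C \<and> y \<in> C \<and> x \<noteq> y}"

end

theory Submission
  imports Defs "HOL-Computational_Algebra.Polynomial" "HOL-Library.FuncSet"
begin


lemma of_nat_card_zero: "of_nat CARD('a::{finite,field}) = (0::'a)"
proof -
  have "(\<Sum>y\<in>(UNIV::'a set). 1 + y) = (\<Sum>y\<in>UNIV. y)"
    by (rule sum.reindex_bij_witness[of _ "\<lambda>y. y - 1" "\<lambda>y. 1 + y"]) auto
  moreover have "(\<Sum>y\<in>(UNIV::'a set). 1 + y) = of_nat CARD('a) + (\<Sum>y\<in>UNIV. y)"
    by (simp add: sum.distrib)
  ultimately show ?thesis by simp
qed

lemma char_prime_field: "prime CHAR('a::{finite,field})"
  using prime_CHAR_semidom[where ?'a='a] finite_imp_CHAR_pos[where ?'a='a] by auto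

lemma q_char_power:
  assumes "prime_power q" "CARD('a::{finite,field}) = q ^ N" "N > 0"
  shows "\<exists>e>0. q = CHAR('a) ^ e"
proof -
  obtain p e where pe: "prime p" "e > 0" "q = p ^ e" using assms(1) prime_power_def by auto
  have "CHAR('a) dvd CARD('a)" using of_nat_card_zero[where 'a='a] of_nat_eq_0_iff_char_dvd by blast
  hence "CHAR('a) dvd p ^ (e*N)" using assms pe by (simp add: power_mult)
  hence "CHAR('a) dvd p" using char_prime_field[where 'a='a] prime_dvd_power by blast
  hence "CHAR('a) = p" using pe char_prime_field[where 'a='a]
    using primes_dvd_imp_eq by blast
  thus ?thesis using pe by auto
qed

lemma power_card_same: "(x::'a::{finite,field}) ^ CARD('a) = x"
proof (cases "x = 0")
  case False
  have "x * (\<Prod>y\<in>UNIV-{0}. x * y) = x * x ^ (card (UNIV :: 'a set) - 1) * \<Prod>(UNIV-{0})"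
    by (simp add: prod.distrib mult_ac)
  also have "x * x ^ (card (UNIV :: 'a set) - 1) = x ^ Suc (card (UNIV :: 'a set) - 1)"
    by (subst power_Suc) auto
  also have "Suc (card (UNIV :: 'a set) - 1) = card (UNIV :: 'a set)"
    using finite_UNIV_card_ge_0[where ?'a = 'a] by simp
  also have "(\<Prod>y\<in>UNIV-{0}. x * y) = (\<Prod>y\<in>UNIV-{0}. y)"
    by (rule prod.reindex_bij_witness[of _ "\<lambda>y. y / x" "\<lambda>y. x * y"]) (use False in auto)
  finally show ?thesis
    by simp
qed (use finite_UNIV_card_ge_0[where ?'a = 'a] in auto)

lemma frob_add:
  fixes x y :: "'a::comm_semiring_1"
  assumes "prime CHAR('a)" "q = CHAR('a) ^ e"
  shows "(x + y) ^ (q ^ i) = x ^ (q ^ i) + y ^ (q ^ i)"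
  using freshmans_dream'[OF assms(1), of "q^i" "e*i"] assms by (simp add: power_mult)

lemma frob_sum:
  fixes f :: "'b \<Rightarrow> 'a::comm_semiring_1"
  assumes "prime CHAR('a)" "q = CHAR('a) ^ e"
  shows "(sum f A) ^ (q ^ i) = (\<Sum>x\<in>A. f x ^ (q ^ i))"
  using freshmans_dream_sum'[OF assms(1), of "q^i" "e*i"] assms by (simp add: power_mult)

lemma frob_diff:
  fixes x y :: "'a::comm_ring_1"
  assumes "prime CHAR('a)" "q = CHAR('a) ^ e"
  shows "(x - y) ^ (q ^ i) = x ^ (q ^ i) - y ^ (q ^ i)"
  using frob_add[OF assms, of "x - y" y i] by (simp add: algebra_simps)



lemma deg_xn_x:
  assumes "n > 1"
  shows "degree (monom 1 n - monom (1::'a::field) 1) = n"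
proof -
  have "monom 1 n - monom (1::'a) 1 = monom 1 n + (- monom 1 1)" by simp
  also have "degree \<dots> = degree (monom (1::'a) n)"
    by (rule degree_add_eq_left) (use assms in \<open>simp add: degree_monom_eq\<close>)
  finally show ?thesis by (simp add: degree_monom_eq)
qed

lemma base_card:
  assumes ch: "prime CHAR('a::{finite,field})" and qe: "q = CHAR('a) ^ e" and e: "e > 0"
    and card: "CARD('a) = q ^ N" and N: "N > 0"
  shows "q \<le> card (base_field q :: 'a set)"
proof -
  have c2: "CHAR('a) \<ge> 2" using ch by (simp add: prime_ge_2_nat)
  have "CHAR('a) ^ 1 \<le> CHAR('a) ^ e" using e c2 by (intro power_increasing) auto
  hence q2: "q \<ge> 2" using qe c2 by simp
  define P1 :: "'a poly" where "P1 = monom 1 q - monom 1 1"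
  define P2 :: "'a poly" where "P2 = monom 1 (q^N) - monom 1 1"
  have chp: "prime CHAR('a poly)" using ch by simp
  have qep: "q = CHAR('a poly) ^ e" using qe by simp
  have tel: "P2 = (\<Sum>i<N. monom 1 (q^(Suc i)) - monom 1 (q^i))"
    unfolding P2_def by (subst sum_lessThan_telescope) simp
  have trm: "monom 1 (q^(Suc i)) - monom 1 (q^i) = P1 ^ (q^i)" for i
    unfolding P1_def frob_diff[OF chp qep] by (simp add: monom_power mult.commute)
  have "P1 dvd P2" unfolding tel trm
    by (intro dvd_sum) (use q2 in auto)
  then obtain h where h: "P2 = P1 * h" by auto
  have dP1: "degree P1 = q" unfolding P1_def
    using q2 by (intro deg_xn_x) auto
  have dP2: "degree P2 = q^N" unfolding P2_def
  proof -
    have "q ^ N > 1" using q2 N by (metis less_le_trans one_less_numeral_iff one_less_power semiring_norm(76))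
    thus "degree (monom 1 (q ^ N) - monom (1::'a) 1) = q ^ N"
      by (intro deg_xn_x)
  qed
  have P1nz: "P1 \<noteq> 0" using dP1 q2 by auto
  have hnz: "h \<noteq> 0" 
  proof
    assume "h = 0"
    hence "degree P2 = 0" using h by simp
    moreover have "q ^ N > 0" using q2 by simp
    ultimately show False using dP2 by simp
  qed
  have dh: "degree h = q^N - q" using degree_mult_eq[OF P1nz hnz] h dP1 dP2 by simp
  have allroot: "poly P2 x = 0" for x :: 'a
    unfolding P2_def using power_card_same[of x] card by (simp add: poly_monom)
  have "UNIV \<subseteq> {x. poly P1 x = 0} \<union> {x::'a. poly h x = 0}"
    using allroot h by auto
  hence "card (UNIV::'a set) \<le> card ({x. poly P1 x = 0} \<union> {x::'a. poly h x = 0})"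
    by (intro card_mono) auto
  also have "\<dots> \<le> card {x. poly P1 x = 0} + card {x::'a. poly h x = 0}" by (rule card_Un_le)
  also have "card {x::'a. poly h x = 0} \<le> q^N - q" using card_poly_roots_bound[OF hnz] dh by simp
  finally have "q^N \<le> card {x. poly P1 x = 0} + (q^N - q)" using card by simp
  moreover have "{x. poly P1 x = 0} = base_field q"
    unfolding P1_def base_field_def by (auto simp: poly_monom)
  moreover have "q \<le> q ^ N" using q2 N by (simp add: self_le_power)
  ultimately show ?thesis by (metis add.commute le_diff_iff' le_add_diff_inverse nat_add_left_cancel_le)
qed

lemma lin_roots:
  assumes q2: "q \<ge> 2" and nz: "\<exists>i<k. a i \<noteq> 0"
  shows "card {x::'a::{idom}. (\<Sum>i<k. a i * x ^ (q ^ i)) = 0} \<le> q ^ (k - 1)"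
proof -
  define P where "P = (\<Sum>i<k. monom (a i) (q ^ i))"
  have ev: "poly P x = (\<Sum>i<k. a i * x ^ (q ^ i))" for x
    unfolding P_def by (simp add: poly_sum poly_monom)
  have cf: "coeff P j = (\<Sum>i<k. if q ^ i = j then a i else 0)" for j
    unfolding P_def by (simp add: coeff_sum coeff_monom)
  obtain i0 where i0: "i0 < k" "a i0 \<noteq> 0" using nz by auto
  have "coeff P (q ^ i0) = a i0"
    unfolding cf using i0 q2
    by (subst sum.mono_neutral_right[of "{..<k}" "{i0}"]) (auto simp: power_inject_exp)
  hence Pnz: "P \<noteq> 0" using i0 by auto
  have "degree P \<le> q ^ (k - 1)"
  proof (rule degree_le, intro allI impI)
    fix j assume j: "q ^ (k - 1) < j"
    have "q ^ i \<noteq> j" if "i < k" for i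
    proof -
      have "q ^ i \<le> q ^ (k - 1)" using that q2 by (intro power_increasing) auto
      thus ?thesis using j by auto
    qed
    thus "coeff P j = 0" unfolding cf by simp
  qed
  thus ?thesis using card_poly_roots_bound[OF Pnz] unfolding ev by simp
qed



locale gset =
  fixes q e N m k :: nat and gs :: "'a::{finite,field} list"
  assumes ch: "prime CHAR('a)" and qe: "q = CHAR('a) ^ e" and e: "e > 0"
    and card: "CARD('a) = q ^ N" and Npos: "N > 0" and gs_len: "length gs = m"
    and indep: "lin_indep_over_Fq q gs" and km: "k \<le> m" and kpos: "k > 0"
begin

definition F :: "(nat \<Rightarrow> 'a) \<Rightarrow> 'a \<Rightarrow> 'a" where
  "F a x = (\<Sum>i<k. a i * x ^ (q ^ i))"

definition C :: "(nat \<Rightarrow> 'a) \<Rightarrow> nat \<Rightarrow> 'a" where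
  "C a s = F a (gs ! s)"

abbreviation "BF \<equiv> (base_field q :: 'a set)"

lemma q2: "q \<ge> 2"
proof -
  have c2: "CHAR('a) \<ge> 2" using ch by (simp add: prime_ge_2_nat)
  have "CHAR('a) ^ 1 \<le> CHAR('a) ^ e" using e c2 by (intro power_increasing) auto
  thus ?thesis using qe c2 by simp
qed

lemma BF_card: "q \<le> card BF"
  using base_card[OF ch qe e card Npos] .

lemma BF_pow: "x \<in> BF \<Longrightarrow> x ^ (q ^ i) = x"
proof (induction i)
  case (Suc i)
  have "x ^ (q ^ Suc i) = (x ^ (q ^ i)) ^ q" by (simp add: power_mult[symmetric] mult.commute)
  thus ?case using Suc by (simp add: base_field_def)
qed simp

lemma BF_diff: "x \<in> BF \<Longrightarrow> y \<in> BF \<Longrightarrow> x - y \<in> BF"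
  using frob_diff[OF ch qe, of x y 1] by (simp add: base_field_def)

lemma BF_0: "0 \<in> BF"
  using q2 by (simp add: base_field_def)

lemma F_lin:
  assumes "\<forall>s<m. l s \<in> BF"
  shows "F a (\<Sum>s<m. l s * gs ! s) = (\<Sum>s<m. l s * C a s)"
proof -
  have "F a (\<Sum>s<m. l s * gs ! s) = (\<Sum>i<k. a i * (\<Sum>s<m. l s * (gs ! s) ^ (q ^ i)))"
    unfolding F_def frob_sum[OF ch qe]
    using assms by (simp add: power_mult_distrib BF_pow)
  also have "\<dots> = (\<Sum>s<m. l s * C a s)"
    unfolding C_def F_def sum_distrib_left
    by (subst sum.swap) (simp add: mult_ac)
  finally show ?thesis .
qed

lemma kernel_bound:
  assumes nz: "\<exists>i<k. a i \<noteq> 0"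
    and S: "S \<subseteq> (\<Pi>\<^sub>E s\<in>{..<m}. BF)" and Sz: "\<forall>l\<in>S. (\<Sum>s<m. l s * C a s) = 0"
  shows "card S \<le> q ^ (k - 1)"
proof -
  define ev where "ev l = (\<Sum>s<m. l s * gs ! s)" for l
  have inj: "inj_on ev S"
  proof
    fix l l' assume l: "l \<in> S" "l' \<in> S" and eq: "ev l = ev l'"
    have "(\<Sum>i<length gs. (l i - l' i) * gs ! i) = 0"
      using eq unfolding ev_def gs_len by (simp add: left_diff_distrib sum_subtractf)
    moreover have "\<forall>i<length gs. l i - l' i \<in> BF"
    proof (intro allI impI BF_diff)
      fix i assume "i < length gs"
      hence i: "i \<in> {..<m}" using gs_len by simp
      show "l i \<in> BF" using l(1) S i by (auto simp: PiE_iff)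
      show "l' i \<in> BF" using l(2) S i by (auto simp: PiE_iff)
    qed
    ultimately have "\<forall>i<length gs. l i - l' i = 0"
      using indep[unfolded lin_indep_over_Fq_def, rule_format, of "\<lambda>i. l i - l' i"] by blast
    hence "\<forall>i<m. l i = l' i" using gs_len by simp
    have lP: "l \<in> (\<Pi>\<^sub>E s\<in>{..<m}. BF)" "l' \<in> (\<Pi>\<^sub>E s\<in>{..<m}. BF)" using l S by auto
    show "l = l'"
    proof
      fix x show "l x = l' x"
      proof (cases "x < m")
        case False thus ?thesis using PiE_arb[OF lP(1), of x] PiE_arb[OF lP(2), of x] by simp
      qed (use \<open>\<forall>i<m. l i = l' i\<close> in auto)
    qed
  qed
  have "ev ` S \<subseteq> {x. F a x = 0}"
  proof
    fix x assume "x \<in> ev ` S"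
    then obtain l where l: "l \<in> S" "x = ev l" by auto
    have "\<forall>s<m. l s \<in> BF" using l S by (auto simp: PiE_iff)
    hence "F a x = (\<Sum>s<m. l s * C a s)" unfolding l ev_def by (rule F_lin)
    thus "x \<in> {x. F a x = 0}" using Sz l by simp
  qed
  hence "card (ev ` S) \<le> card {x. F a x = 0}" by (intro card_mono) auto
  also have "\<dots> \<le> q ^ (k - 1)" unfolding F_def using lin_roots[OF q2 nz] .
  finally show ?thesis using card_image[OF inj] by simp
qed

lemma card_PiE_BF: "finite D \<Longrightarrow> q ^ card D \<le> card (\<Pi>\<^sub>E s\<in>D. BF)"
  by (simp add: card_PiE power_mono BF_card)

lemma nonzero_word:
  assumes nz: "\<exists>i<k. a i \<noteq> 0"
  shows "\<exists>s<m. C a s \<noteq> 0"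
proof (rule ccontr)
  assume "\<not> ?thesis"
  hence "card (\<Pi>\<^sub>E s\<in>{..<m}. BF) \<le> q ^ (k - 1)"
    by (intro kernel_bound[OF nz]) auto
  moreover have "q ^ m \<le> card (\<Pi>\<^sub>E s\<in>{..<m}. BF)" using card_PiE_BF[of "{..<m}"] by simp
  moreover have "q ^ (k - 1) < q ^ m" using q2 km kpos by (intro power_strict_increasing) auto
  ultimately show False by linarith
qed

end


locale gcode = gset q e N m k gs for q e N m k and gs :: "'a::{finite,field} list" +
  fixes Gs :: "nat set list"
  assumes disj: "\<forall>i<length Gs. \<forall>i'<length Gs. i \<noteq> i' \<longrightarrow> Gs ! i \<inter> Gs ! i' = {}"
    and cover: "\<Union> (set Gs) = {..<m}"
begin

abbreviation "L \<equiv> length Gs"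

definition grp :: "nat \<Rightarrow> nat" where
  "grp s = (SOME t. t < L \<and> s \<in> Gs ! t)"

definition pos :: "(nat \<Rightarrow> 'a) \<Rightarrow> nat \<Rightarrow> 'a" where
  "pos a i = (if i < m then C a i else (\<Sum>s\<in>Gs ! (i - m). C a s))"

lemma Gs_sub: "t < L \<Longrightarrow> Gs ! t \<subseteq> {..<m}"
  using cover nth_mem by blast

lemma Gs_fin: "t < L \<Longrightarrow> finite (Gs ! t)"
  using Gs_sub finite_subset by blast

lemma cover': "(\<Union>t\<in>{..<L}. Gs ! t) = {..<m}"
  using cover by (auto simp: set_conv_nth)

lemma grp_prop: "s < m \<Longrightarrow> grp s < L \<and> s \<in> Gs ! grp s"
proof -
  assume "s < m"
  then obtain t where "t < L" "s \<in> Gs ! t" using cover' by auto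
  hence "\<exists>t. t < L \<and> s \<in> Gs ! t" by blast
  thus ?thesis unfolding grp_def by (rule someI_ex)
qed

lemma grp_eq: "t < L \<Longrightarrow> s \<in> Gs ! t \<Longrightarrow> grp s = t"
proof -
  assume t: "t < L" "s \<in> Gs ! t"
  hence "s < m" using Gs_sub by auto
  hence "grp s < L" "s \<in> Gs ! grp s" using grp_prop by auto
  thus ?thesis using disj t by blast
qed

lemma partition_sum:
  fixes w c :: "nat \<Rightarrow> 'b::comm_ring_1"
  shows "(\<Sum>s<m. w (grp s) * c s) = (\<Sum>t<L. w t * (\<Sum>s\<in>Gs ! t. c s))"
proof -
  have "(\<Sum>s<m. w (grp s) * c s) = (\<Sum>t<L. (\<Sum>s\<in>Gs ! t. w (grp s) * c s))"
    unfolding cover'[symmetric]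
    by (rule sum.UNION_disjoint) (use Gs_fin disj in auto)
  also have "\<dots> = (\<Sum>t<L. w t * (\<Sum>s\<in>Gs ! t. c s))"
    by (intro sum.cong refl) (simp add: sum_distrib_left grp_eq del: sum.distrib)
  finally show ?thesis .
qed

lemma comb_LB:
  assumes nz: "\<exists>i<k. a i \<noteq> 0"
    and Z0_def: "Z0 = {s. s < m \<and> C a s = 0}"
    and Z1_def: "Z1 = {t. t < L \<and> (\<Sum>s\<in>Gs ! t. C a s) = 0}"
    and A_def: "A = {t. t < L \<and> Gs ! t \<subseteq> Z0}"
  shows "card Z0 + card (Z1 - A) \<le> k - 1"
proof -
  define D where "D = Z0 \<union> (\<lambda>t. m + t) ` (Z1 - A)"
  have finD: "finite D" unfolding D_def Z0_def Z1_def by auto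
  have cardD: "card D = card Z0 + card (Z1 - A)"
  proof -
    have "card D = card Z0 + card ((\<lambda>t. m + t) ` (Z1 - A))"
      unfolding D_def by (rule card_Un_disjoint) (auto simp: Z0_def Z1_def)
    thus ?thesis by (simp add: card_image)
  qed
  define \<Phi> where "\<Phi> \<mu> = (\<lambda>s. if s < m then (if s \<in> Z0 then \<mu> s
      else if grp s \<in> Z1 - A then \<mu> (m + grp s) else 0) else undefined)" for \<mu> :: "nat \<Rightarrow> 'a"
  define S where "S = \<Phi> ` (\<Pi>\<^sub>E s\<in>D. BF)"
  have inj: "inj_on \<Phi> (\<Pi>\<^sub>E s\<in>D. BF)"
  proof
    fix \<mu> \<mu>' assume mu: "\<mu> \<in> (\<Pi>\<^sub>E s\<in>D. BF)" "\<mu>' \<in> (\<Pi>\<^sub>E s\<in>D. BF)" and eq: "\<Phi> \<mu> = \<Phi> \<mu>'"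
    show "\<mu> = \<mu>'"
    proof
      fix x
      show "\<mu> x = \<mu>' x"
      proof (cases "x \<in> D")
        case False thus ?thesis using PiE_arb[OF mu(1)] PiE_arb[OF mu(2)] by simp
      next
        case True
        show ?thesis
        proof (cases "x \<in> Z0")
          case True
          hence "x < m" unfolding Z0_def by simp
          thus ?thesis using fun_cong[OF eq, of x] True unfolding \<Phi>_def by simp
        next
          case False
          then obtain t where t: "t \<in> Z1 - A" "x = m + t" using \<open>x \<in> D\<close> unfolding D_def by auto
          hence tL: "t < L" unfolding Z1_def by simp
          from t have "\<not> Gs ! t \<subseteq> Z0" unfolding A_def using tL by simp
          then obtain u where u: "u \<in> Gs ! t" "u \<notin> Z0" by auto
          have um: "u < m" using u Gs_sub tL by auto
          have gu: "grp u = t" using grp_eq tL u by simp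
          have "\<Phi> \<mu> u = \<mu> x" "\<Phi> \<mu>' u = \<mu>' x" unfolding \<Phi>_def using um u gu t by auto
          thus ?thesis using eq by simp
        qed
      qed
    qed
  qed
  have Ssub: "S \<subseteq> (\<Pi>\<^sub>E s\<in>{..<m}. BF)"
  proof
    fix l assume "l \<in> S"
    then obtain \<mu> where mu: "\<mu> \<in> (\<Pi>\<^sub>E s\<in>D. BF)" "l = \<Phi> \<mu>" unfolding S_def by auto
    have "\<mu> s \<in> BF" if "s \<in> D" for s using mu that by (auto simp: PiE_iff)
    thus "l \<in> (\<Pi>\<^sub>E s\<in>{..<m}. BF)"
      unfolding mu \<Phi>_def D_def by (auto simp: PiE_iff BF_0 extensional_def)
  qed
  have Sz: "\<forall>l\<in>S. (\<Sum>s<m. l s * C a s) = 0"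
  proof
    fix l assume "l \<in> S"
    then obtain \<mu> where mu: "l = \<Phi> \<mu>" unfolding S_def by auto
    define w where "w t = (if t \<in> Z1 - A then \<mu> (m + t) else 0)" for t
    have "(\<Sum>s<m. l s * C a s) = (\<Sum>s<m. w (grp s) * C a s)"
      by (intro sum.cong refl) (auto simp: mu \<Phi>_def w_def Z0_def)
    also have "\<dots> = (\<Sum>t<L. w t * (\<Sum>s\<in>Gs ! t. C a s))" by (rule partition_sum)
    also have "\<dots> = 0"
      by (intro sum.neutral) (auto simp: w_def Z1_def)
    finally show "(\<Sum>s<m. l s * C a s) = 0" .
  qed
  have "card S \<le> q ^ (k - 1)" by (rule kernel_bound[OF nz Ssub Sz])
  moreover have "card S = card (\<Pi>\<^sub>E s\<in>D. BF)" unfolding S_def by (rule card_image[OF inj])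
  moreover have "q ^ card D \<le> card (\<Pi>\<^sub>E s\<in>D. BF)" by (rule card_PiE_BF[OF finD])
  ultimately have "q ^ card D \<le> q ^ (k - 1)" by linarith
  hence "card D \<le> k - 1" using q2 by (simp add: power_le_imp_le_exp)
  thus ?thesis using cardD by simp
qed

end


lemma homog_exists:
  fixes E :: "(nat \<Rightarrow> 'a::field) list"
  assumes "finite I" "length E < card I"
  shows "\<exists>x. (\<exists>i\<in>I. x i \<noteq> 0) \<and> (\<forall>e\<in>set E. (\<Sum>i\<in>I. e i * x i) = 0)"
  using assms
proof (induction "length E" arbitrary: E I)
  case 0
  hence "I \<noteq> {}" by auto
  then obtain i where "i \<in> I" by blast
  thus ?case using 0 by (intro exI[of _ "\<lambda>_. 1"]) auto
next
  case (Suc n)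
  then obtain e E0 where EE: "E = e # E0" by (cases E) auto
  have lE0: "length E0 = n" using Suc.hyps(2) EE by simp
  show ?case
  proof (cases "\<forall>i\<in>I. e i = 0")
    case True
    obtain x where x: "\<exists>i\<in>I. x i \<noteq> 0" "\<forall>e\<in>set E0. (\<Sum>i\<in>I. e i * x i) = 0"
      using Suc.hyps(1)[OF lE0[symmetric], of I] Suc.prems EE by auto
    thus ?thesis using True EE by (intro exI[of _ x]) auto
  next
    case False
    then obtain i0 where i0: "i0 \<in> I" "e i0 \<noteq> 0" by auto
    define E' where "E' = map (\<lambda>e' i. e' i - e' i0 / e i0 * e i) E0"
    have lE': "n = length E'" using lE0 by (simp add: E'_def)
    have "length E' < card (I - {i0})" using Suc.prems i0 EE by (simp add: E'_def)
    then obtain x where x: "\<exists>i\<in>I - {i0}. x i \<noteq> 0" "\<forall>e\<in>set E'. (\<Sum>i\<in>I - {i0}. e i * x i) = 0"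
      using Suc.hyps(1)[OF lE', of "I - {i0}"] Suc.prems by auto
    define s where "s = (\<Sum>i\<in>I - {i0}. e i * x i)"
    define y where "y = x(i0 := - s / e i0)"
    have sp: "(\<Sum>i\<in>I. f i * y i) = f i0 * y i0 + (\<Sum>i\<in>I - {i0}. f i * x i)" for f
    proof -
      have "(\<Sum>i\<in>I. f i * y i) = f i0 * y i0 + (\<Sum>i\<in>I - {i0}. f i * y i)"
        using Suc.prems(1) i0 by (simp add: sum.remove)
      moreover have "(\<Sum>i\<in>I - {i0}. f i * y i) = (\<Sum>i\<in>I - {i0}. f i * x i)"
        by (intro sum.cong refl) (simp add: y_def)
      ultimately show ?thesis by simp
    qed
    have "\<exists>i\<in>I. y i \<noteq> 0" using x(1) by (auto simp: y_def)
    moreover have "(\<Sum>i\<in>I. e i * y i) = 0"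
      unfolding sp using i0 by (simp add: y_def s_def)
    moreover have "(\<Sum>i\<in>I. e' i * y i) = 0" if e': "e' \<in> set E0" for e'
    proof -
      have "(\<lambda>i. e' i - e' i0 / e i0 * e i) \<in> set E'" using e' by (auto simp: E'_def)
      hence "(\<Sum>i\<in>I - {i0}. (e' i - e' i0 / e i0 * e i) * x i) = 0"
        using bspec[OF x(2) \<open>(\<lambda>i. e' i - e' i0 / e i0 * e i) \<in> set E'\<close>] by simp
      moreover have "(\<Sum>i\<in>I - {i0}. (e' i - e' i0 / e i0 * e i) * x i)
          = (\<Sum>i\<in>I - {i0}. e' i * x i) - e' i0 / e i0 * s"
        unfolding s_def by (simp add: left_diff_distrib sum_subtractf sum_distrib_left mult.assoc)
      ultimately have h: "(\<Sum>i\<in>I - {i0}. e' i * x i) = e' i0 / e i0 * s" by simp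
      have "e' i0 * y i0 + e' i0 / e i0 * s = 0"
        using i0(2) by (simp add: y_def)
      thus ?thesis unfolding sp h .
    qed
    ultimately show ?thesis using EE by auto
  qed
qed



context gcode
begin

lemma zero_LB:
  assumes nz: "\<exists>i<k. a i \<noteq> 0"
  shows "\<exists>A. A \<subseteq> {..<L} \<and> card {i. i < m + L \<and> pos a i = 0} \<le> k - 1 + card A
            \<and> (\<Sum>t\<in>A. card (Gs ! t)) \<le> k - 1"
proof -
  define Z0 where "Z0 = {s. s < m \<and> C a s = 0}"
  define Z1 where "Z1 = {t. t < L \<and> (\<Sum>s\<in>Gs ! t. C a s) = 0}"
  define A where "A = {t. t < L \<and> Gs ! t \<subseteq> Z0}"
  have lb: "card Z0 + card (Z1 - A) \<le> k - 1" by (rule comb_LB[OF nz Z0_def Z1_def A_def])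
  have AZ1: "A \<subseteq> Z1" unfolding A_def Z1_def Z0_def by (auto intro!: sum.neutral)
  have "{i. i < m + L \<and> pos a i = 0} = Z0 \<union> (\<lambda>t. m + t) ` Z1"
  proof (rule set_eqI, rule iffI)
    fix i assume i: "i \<in> {i. i < m + L \<and> pos a i = 0}"
    show "i \<in> Z0 \<union> (\<lambda>t. m + t) ` Z1"
    proof (cases "i < m")
      case True thus ?thesis using i by (auto simp: Z0_def pos_def)
    next
      case False
      hence "i - m \<in> Z1" using i by (auto simp: Z1_def pos_def)
      thus ?thesis using False by (auto intro!: image_eqI[of _ _ "i - m"])
    qed
  qed (auto simp: Z0_def Z1_def pos_def)
  moreover have "card (Z0 \<union> (\<lambda>t. m + t) ` Z1) = card Z0 + card Z1"
  proof -
    have "card (Z0 \<union> (\<lambda>t. m + t) ` Z1) = card Z0 + card ((\<lambda>t. m + t) ` Z1)"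
      by (rule card_Un_disjoint) (auto simp: Z0_def Z1_def)
    thus ?thesis by (simp add: card_image)
  qed
  moreover have "card Z1 = card (Z1 - A) + card A"
  proof -
    have "finite Z1" unfolding Z1_def by simp
    hence "finite A" using AZ1 finite_subset by blast
    have "Z1 = (Z1 - A) \<union> A" using AZ1 by blast
    hence "card Z1 = card ((Z1 - A) \<union> A)" by simp
    also have "\<dots> = card (Z1 - A) + card A"
      by (rule card_Un_disjoint) (use \<open>finite Z1\<close> \<open>finite A\<close> in auto)
    finally show ?thesis .
  qed
  moreover have "(\<Sum>t\<in>A. card (Gs ! t)) \<le> card Z0"
  proof -
    have "(\<Sum>t\<in>A. card (Gs ! t)) = card (\<Union>t\<in>A. Gs ! t)"
      by (rule card_UN_disjoint[symmetric]) (use disj Gs_fin in \<open>auto simp: A_def\<close>)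
    also have "\<dots> \<le> card Z0" by (intro card_mono) (auto simp: A_def Z0_def)
    finally show ?thesis .
  qed
  ultimately show ?thesis using lb by (intro exI[of _ A]) (auto simp: A_def)
qed

lemma zero_UB:
  assumes T: "T \<subseteq> {..<L}" and Ts: "(\<Sum>t\<in>T. card (Gs ! t)) \<le> k - 1"
  shows "\<exists>a. (\<exists>i<k. a i \<noteq> 0) \<and> k - 1 + card T \<le> card {i. i < m + L \<and> pos a i = 0}"
proof -
  define U where "U = (\<Union>t\<in>T. Gs ! t)"
  have finT: "finite T" using T finite_subset by blast
  have cU: "card U = (\<Sum>t\<in>T. card (Gs ! t))" unfolding U_def
    by (rule card_UN_disjoint) (use disj Gs_fin T finT in auto)
  have Um: "U \<subseteq> {..<m}" unfolding U_def using Gs_sub T by auto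
  have "k - 1 - card U \<le> card ({..<m} - U)"
    using Um km kpos cU Ts by (simp add: card_Diff_subset finite_subset)
  then obtain V where V: "V \<subseteq> {..<m} - U" "card V = k - 1 - card U" "finite V"
    by (rule obtain_subset_with_card_n)
  define Z0 where "Z0 = U \<union> V"
  have finU: "finite U" using Um finite_subset by blast
  have cZ0: "card Z0 = k - 1" unfolding Z0_def using V cU Ts finU
    by (subst card_Un_disjoint) auto
  have Z0m: "Z0 \<subseteq> {..<m}" unfolding Z0_def using Um V by auto
  have finZ0: "finite Z0" using Z0m finite_subset by blast
  define Eq where "Eq = map (\<lambda>s i. (gs ! s) ^ (q ^ i)) (sorted_list_of_set Z0)"
  have "length Eq < card {..<k}" using cZ0 kpos finZ0 by (simp add: Eq_def)
  then obtain a where a: "\<exists>i\<in>{..<k}. a i \<noteq> 0" "\<forall>e\<in>set Eq. (\<Sum>i\<in>{..<k}. e i * a i) = 0"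
    using homog_exists[of "{..<k}" Eq] by auto
  have Ca: "C a s = 0" if "s \<in> Z0" for s
  proof -
    have "(\<lambda>i. (gs ! s) ^ (q ^ i)) \<in> set Eq" using that finZ0 by (auto simp: Eq_def)
    hence "(\<Sum>i<k. (gs ! s) ^ (q ^ i) * a i) = 0" using a(2) by auto
    thus ?thesis by (simp add: C_def F_def mult.commute)
  qed
  have sub: "Z0 \<union> (\<lambda>t. m + t) ` T \<subseteq> {i. i < m + L \<and> pos a i = 0}"
  proof -
    have "pos a (m + t) = 0" if "t \<in> T" for t
    proof -
      have "Gs ! t \<subseteq> Z0" using that unfolding Z0_def U_def by auto
      thus ?thesis using Ca by (auto simp: pos_def intro!: sum.neutral)
    qed
    thus ?thesis using Z0m T Ca by (auto simp: pos_def)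
  qed
  have "card (Z0 \<union> (\<lambda>t. m + t) ` T) = card Z0 + card ((\<lambda>t. m + t) ` T)"
    by (rule card_Un_disjoint) (use finZ0 finT Z0m in auto)
  also have "\<dots> = k - 1 + card T" using cZ0 by (simp add: card_image)
  finally have c1: "card (Z0 \<union> (\<lambda>t. m + t) ` T) = k - 1 + card T" .
  have "finite {i. i < m + L \<and> pos a i = 0}" by simp
  from card_mono[OF this sub] c1 have "k - 1 + card T \<le> card {i. i < m + L \<and> pos a i = 0}" by simp
  thus ?thesis using a(1) by auto
qed

end


lemma ceil_div: assumes "r > 0" "k > 0" shows "ceiling (real k / real r) = int ((k + r - 1) div r)"
proof -
  define c where "c = (k + r - 1) div r"
  have a1: "c * r \<le> k + r - 1" unfolding c_def by simp
  have a2: "k + r - 1 < (c + 1) * r"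
    unfolding c_def using assms
    by (metis add.commute div_mult_mod_eq mod_less_divisor mult_Suc nat_add_left_cancel_less plus_1_eq_Suc)
  have n1: "(c - 1) * r < k"
  proof -
    have "(c - 1) * r = c * r - r" by (simp add: diff_mult_distrib)
    thus ?thesis using a1 assms by linarith
  qed
  have n2: "k \<le> c * r" using a2 by (simp add: algebra_simps)
  have h1: "real (c - 1) * real r < real k" "real k \<le> real c * real r"
    using n1 n2 by (simp_all only: of_nat_mult[symmetric] of_nat_less_iff of_nat_le_iff)
  have "real k / real r \<le> real c" using h1(2) assms by (simp add: divide_le_eq)
  moreover have "real c - 1 < real k / real r"
  proof (cases "c = 0")
    case True
    have "0 \<le> real k / real r" by simp
    thus ?thesis using True by linarith
  next
    case False
    hence "real (c - 1) = real c - 1" by simp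
    thus ?thesis using h1(1) assms by (simp add: less_divide_eq)
  qed
  ultimately have "ceiling (real k / real r) = int c"
    by (intro ceiling_unique) auto
  thus ?thesis unfolding c_def .
qed

lemma arith_groups:
  fixes Gs :: "nat set list" and m k r :: nat
  assumes r: "r > 0" and km: "k \<le> m" and rk: "r < k"
    and cases: "m mod r = 0 \<or> (\<exists>j. 1 \<le> j \<and> j < r \<and> m mod r = j \<and> k mod r = j)"
    and Gs_len: "length Gs = m div r + (if m mod r = 0 then 0 else 1)"
    and Gs_card: "\<forall>i<length Gs. card (Gs ! i) = (if i < m div r then r else m mod r)"
  shows "(\<forall>A \<subseteq> {..<length Gs}. (\<Sum>t\<in>A. card (Gs ! t)) \<le> k - 1 \<longrightarrow> card A \<le> (k + r - 1) div r - 1)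
       \<and> (\<exists>T \<subseteq> {..<length Gs}. (\<Sum>t\<in>T. card (Gs ! t)) \<le> k - 1 \<and> card T = (k + r - 1) div r - 1)"
  using cases
proof
  assume m0: "m mod r = 0"
  have cr: "(k + r - 1) div r - 1 = (k - 1) div r"
  proof -
    have e: "k + r - 1 = (k - 1) + r" using rk by simp
    have "(k - 1 + r) div r = (k - 1) div r + 1" using r by simp
    thus ?thesis unfolding e by simp
  qed
  have L: "length Gs = m div r" using Gs_len m0 by simp
  have cardr: "t < length Gs \<Longrightarrow> card (Gs ! t) = r" for t using Gs_card L by simp
  have sumr: "A \<subseteq> {..<length Gs} \<Longrightarrow> (\<Sum>t\<in>A. card (Gs ! t)) = card A * r" for A
  proof -
    assume "A \<subseteq> {..<length Gs}"
    hence "(\<Sum>t\<in>A. card (Gs ! t)) = (\<Sum>t\<in>A. r)" by (intro sum.cong refl) (use cardr in auto)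
    thus ?thesis by simp
  qed
  show ?thesis
  proof (intro conjI allI impI)
    fix A assume A: "A \<subseteq> {..<length Gs}" "(\<Sum>t\<in>A. card (Gs ! t)) \<le> k - 1"
    hence "card A * r \<le> k - 1" using sumr by simp
    thus "card A \<le> (k + r - 1) div r - 1" unfolding cr using r by (simp add: less_eq_div_iff_mult_less_eq)
  next
    define T where "T = {..<(k - 1) div r}"
    have "(k - 1) div r \<le> m div r" using km by (intro div_le_mono) simp
    hence T: "T \<subseteq> {..<length Gs}" unfolding T_def L by auto
    moreover have "(\<Sum>t\<in>T. card (Gs ! t)) \<le> k - 1" using sumr[OF T] by (simp add: T_def)
    moreover have "card T = (k + r - 1) div r - 1" unfolding cr T_def by simp
    ultimately show "\<exists>T \<subseteq> {..<length Gs}. (\<Sum>t\<in>T. card (Gs ! t)) \<le> k - 1 \<and> card T = (k + r - 1) div r - 1"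
      by blast
  qed
next
  assume "\<exists>j. 1 \<le> j \<and> j < r \<and> m mod r = j \<and> k mod r = j"
  then obtain j where j: "1 \<le> j" "j < r" "m mod r = j" "k mod r = j" by auto
  define M where "M = m div r"
  define c where "c = k div r"
  have kc: "k = c * r + j" unfolding c_def using j(4) div_mult_mod_eq[of k r] by simp
  have c1: "c \<ge> 1" using rk kc j by (cases c) auto
  have cM: "c \<le> M" unfolding c_def M_def using km by (intro div_le_mono)
  have cr: "(k + r - 1) div r - 1 = c"
  proof -
    have "(k + r - 1) div r = Suc c"
      by (rule div_nat_eqI) (use kc j in \<open>auto simp: algebra_simps\<close>)
    thus ?thesis by simp
  qed
  have L: "length Gs = Suc M" using Gs_len j unfolding M_def by simp
  have cardr: "t < M \<Longrightarrow> card (Gs ! t) = r" for t using Gs_card L unfolding M_def by simp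
  have cardM: "card (Gs ! M) = j" using Gs_card L j unfolding M_def by simp
  show ?thesis
  proof (intro conjI allI impI)
    fix A assume A: "A \<subseteq> {..<length Gs}" "(\<Sum>t\<in>A. card (Gs ! t)) \<le> k - 1"
    have finA: "finite A" using A(1) finite_subset by blast
    have AM: "A - {M} \<subseteq> {..<M}" using A(1) L by auto
    have s1: "(\<Sum>t\<in>A - {M}. card (Gs ! t)) = card (A - {M}) * r"
    proof -
      have "(\<Sum>t\<in>A - {M}. card (Gs ! t)) = (\<Sum>t\<in>A - {M}. r)" by (intro sum.cong refl) (use AM cardr in auto)
      thus ?thesis by simp
    qed
    show "card A \<le> (k + r - 1) div r - 1"
    proof (cases "card A = 0")
      case False
      have "(card A - 1) * r + j \<le> (\<Sum>t\<in>A. card (Gs ! t))"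
      proof (cases "M \<in> A")
        case True
        have "(\<Sum>t\<in>A. card (Gs ! t)) = card (Gs ! M) + (\<Sum>t\<in>A - {M}. card (Gs ! t))"
          using True finA by (simp add: sum.remove)
        moreover have "card (A - {M}) = card A - 1" using True finA by simp
        ultimately show ?thesis using s1 cardM by simp
      next
        case Mn: False
        hence "A - {M} = A" by simp
        hence "(\<Sum>t\<in>A. card (Gs ! t)) = card A * r" using s1 by simp
        moreover have "card A * r = (card A - 1) * r + r" using False by (cases "card A") auto
        ultimately show ?thesis using j by simp
      qed
      hence "(card A - 1) * r + j \<le> c * r + j - 1" using A(2) kc by simp
      hence "(card A - 1) * r < c * r" using j by linarith
      hence "card A - 1 < c" by simp
      thus ?thesis unfolding cr by simp
    qed simp
  next
    define T where "T = insert M {..<c - 1}"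
    have T: "T \<subseteq> {..<length Gs}" unfolding T_def L using cM by auto
    have MT: "M \<notin> {..<c - 1}" using cM c1 by simp
    have cT: "card T = c" unfolding T_def using MT c1 by simp
    have "(\<Sum>t\<in>T. card (Gs ! t)) = j + (\<Sum>t\<in>{..<c - 1}. card (Gs ! t))"
      unfolding T_def using MT cardM by simp
    also have "(\<Sum>t\<in>{..<c - 1}. card (Gs ! t)) = (c - 1) * r"
    proof -
      have "(\<Sum>t\<in>{..<c - 1}. card (Gs ! t)) = (\<Sum>t\<in>{..<c - 1}. r)" by (intro sum.cong refl) (use cardr cM c1 in auto)
      thus ?thesis by simp
    qed
    finally have "(\<Sum>t\<in>T. card (Gs ! t)) = j + (c - 1) * r" .
    moreover have "j + (c - 1) * r \<le> k - 1" using kc c1 r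
      by (cases c) (auto simp: algebra_simps)
    ultimately show "\<exists>T \<subseteq> {..<length Gs}. (\<Sum>t\<in>T. card (Gs ! t)) \<le> k - 1 \<and> card T = (k + r - 1) div r - 1"
      using T cT cr by (intro exI[of _ T]) auto
  qed
qed



context gcode
begin

definition cw :: "(nat \<Rightarrow> 'a) \<Rightarrow> 'a list" where
  "cw a = map (\<lambda>g. \<Sum>i<k. a i * g ^ (q ^ i)) gs"

definition lw :: "(nat \<Rightarrow> 'a) \<Rightarrow> 'a list" where
  "lw a = cw a @ map (\<lambda>G. \<Sum>s\<in>G. cw a ! s) Gs"

lemma LC_eq: "local_code Gs (gabidulin q k gs) = range lw"
  unfolding local_code_def gabidulin_def lw_def cw_def by auto

lemma lw_len: "length (lw a) = m + L"
  by (simp add: lw_def cw_def gs_len)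

lemma cw_nth: "s < m \<Longrightarrow> cw a ! s = C a s"
  by (simp add: cw_def C_def F_def gs_len)

lemma lw_nth: "i < m + L \<Longrightarrow> lw a ! i = pos a i"
proof -
  assume i: "i < m + L"
  show ?thesis
  proof (cases "i < m")
    case True thus ?thesis by (simp add: lw_def nth_append cw_nth pos_def) (simp add: cw_def gs_len)
  next
    case False
    hence il: "i - m < L" using i by simp
    have "lw a ! i = (\<Sum>s\<in>Gs ! (i - m). cw a ! s)"
      using False il by (simp add: lw_def nth_append) (simp add: cw_def gs_len)
    also have "\<dots> = (\<Sum>s\<in>Gs ! (i - m). C a s)"
      by (intro sum.cong refl cw_nth) (use Gs_sub il in auto)
    finally show ?thesis using False by (simp add: pos_def)
  qed
qed

lemma F_diff: "F (\<lambda>i. a i - b i) x = F a x - F b x"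
  unfolding F_def by (simp add: left_diff_distrib sum_subtractf)

lemma pos_diff: "pos (\<lambda>i. a i - b i) t = pos a t - pos b t"
  unfolding pos_def C_def F_diff by (simp add: sum_subtractf)

lemma pos_zero: "\<forall>i<k. a i = 0 \<Longrightarrow> pos a t = 0"
  unfolding pos_def C_def F_def by simp

lemma card_compl: "card {i. i < n \<and> P i} = n - card {i. i < n \<and> \<not> P i}"
proof -
  have u: "{..<n} = {i. i < n \<and> P i} \<union> {i. i < n \<and> \<not> P i}" by auto
  have "card {..<n} = card ({i. i < n \<and> P i} \<union> {i. i < n \<and> \<not> P i})" using u by (rule arg_cong)
  also have "\<dots> = card {i. i < n \<and> P i} + card {i. i < n \<and> \<not> P i}"
    by (rule card_Un_disjoint) auto
  finally have "n = card {i. i < n \<and> P i} + card {i. i < n \<and> \<not> P i}" by (simp only: card_lessThan)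
  thus ?thesis by linarith
qed

lemma ham: "hamming_dist (lw a) (lw b) = m + L - card {i. i < m + L \<and> pos (\<lambda>i. a i - b i) i = 0}"
proof -
  have "hamming_dist (lw a) (lw b) = card {i. i < m + L \<and> pos (\<lambda>i. a i - b i) i \<noteq> 0}"
    unfolding hamming_dist_def lw_len
    by (intro arg_cong[where f=card]) (auto simp: lw_nth pos_diff)
  thus ?thesis using card_compl[of "m + L" "\<lambda>i. pos (\<lambda>i. a i - b i) i \<noteq> 0"] by simp
qed

end


context gcode
begin

lemma min_dist_eq:
  assumes HA: "\<forall>A \<subseteq> {..<L}. (\<Sum>t\<in>A. card (Gs ! t)) \<le> k - 1 \<longrightarrow> card A \<le> \<rho>"
    and HT: "\<exists>T \<subseteq> {..<L}. (\<Sum>t\<in>T. card (Gs ! t)) \<le> k - 1 \<and> card T = \<rho>"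
  shows "min_dist (range lw) = m + L - (k - 1) - \<rho>"
proof -
  define W where "W = {hamming_dist x y | x y. x \<in> range lw \<and> y \<in> range lw \<and> x \<noteq> y}"
  have low: "m + L - (k - 1) - \<rho> \<le> w" if "w \<in> W" for w
  proof -
    from that obtain x y where xy: "w = hamming_dist x y" "x \<in> range lw" "y \<in> range lw" "x \<noteq> y"
      unfolding W_def by blast
    then obtain a b where "x = lw a" "y = lw b" by blast
    hence ab: "w = hamming_dist (lw a) (lw b)" "lw a \<noteq> lw b" using xy by auto
    define d where "d = (\<lambda>i. a i - b i)"
    have "\<exists>i<k. d i \<noteq> 0"
    proof (rule ccontr)
      assume "\<not> ?thesis"
      hence "pos d t = 0" for t using pos_zero by auto
      hence "lw a ! i = lw b ! i" if "i < m + L" for i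
        using that pos_diff[of a b i] unfolding d_def by (simp add: lw_nth)
      hence "lw a = lw b" by (intro nth_equalityI) (auto simp: lw_len)
      thus False using ab by simp
    qed
    then obtain A where A: "A \<subseteq> {..<L}" "card {i. i < m + L \<and> pos d i = 0} \<le> k - 1 + card A"
      "(\<Sum>t\<in>A. card (Gs ! t)) \<le> k - 1" using zero_LB by blast
    have "card A \<le> \<rho>" using HA A by blast
    thus ?thesis using ab(1) ham[of a b] A(2) unfolding d_def by simp
  qed
  obtain T where T: "T \<subseteq> {..<L}" "(\<Sum>t\<in>T. card (Gs ! t)) \<le> k - 1" "card T = \<rho>" using HT by blast
  obtain a where a: "\<exists>i<k. a i \<noteq> 0" "k - 1 + card T \<le> card {i. i < m + L \<and> pos a i = 0}"
    using zero_UB[OF T(1,2)] by blast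
  obtain s where s: "s < m" "C a s \<noteq> 0" using nonzero_word[OF a(1)] by blast
  define z :: "nat \<Rightarrow> 'a" where "z = (\<lambda>_. 0)"
  have neq: "lw a \<noteq> lw z"
  proof
    assume "lw a = lw z"
    have sm: "s < m + L" using s by simp
    have "pos a s = lw a ! s" by (rule lw_nth[OF sm, symmetric])
    also have "\<dots> = lw z ! s" using \<open>lw a = lw z\<close> by (rule arg_cong)
    also have "\<dots> = pos z s" by (rule lw_nth[OF sm])
    finally have "pos a s = pos z s" .
    moreover have "pos z s = 0" by (rule pos_zero) (simp add: z_def)
    ultimately show False using s by (simp add: pos_def)
  qed
  define w0 where "w0 = hamming_dist (lw a) (lw z)"
  have w0W: "w0 \<in> W" unfolding W_def w0_def using neq by blast
  have "w0 \<le> m + L - (k - 1) - \<rho>" unfolding w0_def ham z_def using a(2) T(3) by simp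
  hence w0eq: "w0 = m + L - (k - 1) - \<rho>" using low[OF w0W] by simp
  have finLC: "finite (range lw)"
  proof (rule finite_subset)
    show "range lw \<subseteq> {xs. set xs \<subseteq> UNIV \<and> length xs = m + L}" by (auto simp: lw_len)
    show "finite {xs. set xs \<subseteq> (UNIV::'a set) \<and> length xs = m + L}"
      by (rule finite_lists_length_eq) simp
  qed
  have "W \<subseteq> (\<lambda>(x, y). hamming_dist x y) ` (range lw \<times> range lw)" unfolding W_def by auto
  hence finW: "finite W" using finLC finite_subset by blast
  have "Min W = m + L - (k - 1) - \<rho>"
    by (rule Min_eqI[OF finW]) (use low w0W w0eq in auto)
  thus ?thesis unfolding min_dist_def W_def .
qed

end


context gcode
begin

definition dl :: "nat \<Rightarrow> nat \<Rightarrow> 'a" where "dl j = (\<lambda>i. if i = j then 1 else 0)"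

lemma F_dl: "i < k \<Longrightarrow> F (dl i) x = x ^ (q ^ i)"
proof -
  assume i: "i < k"
  have "F (dl i) x = (\<Sum>j<k. if j = i then x ^ (q ^ j) else 0)"
    unfolding F_def dl_def by (intro sum.cong refl) auto
  thus ?thesis using i by simp
qed

lemma F_expand: "F a x = (\<Sum>i<k. a i * F (dl i) x)"
  unfolding F_def by (intro sum.cong refl) (simp add: F_dl[unfolded F_def])

lemma pos_expand: "pos a t = (\<Sum>i<k. a i * pos (dl i) t)"
proof (cases "t < m")
  case True
  have "pos a t = F a (gs ! t)" using True by (simp add: pos_def C_def)
  also have "\<dots> = (\<Sum>i<k. a i * F (dl i) (gs ! t))" by (rule F_expand)
  also have "\<dots> = (\<Sum>i<k. a i * pos (dl i) t)" using True by (simp add: pos_def C_def)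
  finally show ?thesis .
next
  case False
  have "pos a t = (\<Sum>s\<in>Gs ! (t - m). F a (gs ! s))" using False by (simp add: pos_def C_def)
  also have "\<dots> = (\<Sum>s\<in>Gs ! (t - m). \<Sum>i<k. a i * F (dl i) (gs ! s))"
    by (intro sum.cong refl F_expand)
  also have "\<dots> = (\<Sum>i<k. \<Sum>s\<in>Gs ! (t - m). a i * F (dl i) (gs ! s))" by (rule sum.swap)
  also have "\<dots> = (\<Sum>i<k. a i * pos (dl i) t)"
    using False by (simp add: pos_def C_def sum_distrib_left)
  finally show ?thesis .
qed

lemma lin_dim: "linear_code_dim (m + L) k (range lw)"
proof -
  define B where "B = map (\<lambda>j. lw (dl j)) [0..<k]"
  have lc: "lincomb (m + L) a B = lw a" for a
  proof (rule nth_equalityI)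
    show "length (lincomb (m + L) a B) = length (lw a)" by (simp add: lincomb_def lw_len)
    fix t assume "t < length (lincomb (m + L) a B)"
    hence t: "t < m + L" by (simp add: lincomb_def)
    have "lincomb (m + L) a B ! t = (\<Sum>i<k. a i * pos (dl i) t)"
      using t by (simp add: lincomb_def B_def lw_nth)
    also have "\<dots> = lw a ! t" using t by (simp add: lw_nth pos_expand[symmetric])
    finally show "lincomb (m + L) a B ! t = lw a ! t" .
  qed
  have f1: "length B = k" by (simp add: B_def)
  have f2: "\<forall>b\<in>set B. length b = m + L" by (auto simp: B_def lw_len)
  have f3: "range lw = {lincomb (m + L) a B |a. True}" unfolding lc by auto
  have f4: "\<forall>a. lincomb (m + L) a B = replicate (m + L) 0 \<longrightarrow> (\<forall>i<k. a i = 0)"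
  proof (rule allI, rule impI)
    fix a assume "lincomb (m + L) a B = replicate (m + L) 0"
    hence z: "lw a = replicate (m + L) 0" unfolding lc .
    have "C a s = 0" if "s < m" for s
      using lw_nth[of s a] that z by (simp add: pos_def)
    thus "\<forall>i<k. a i = 0" using nonzero_word by blast
  qed
  show ?thesis unfolding linear_code_dim_def using f1 f2 f3 f4 by blast
qed

end

theorem theorem2:
  fixes q N m k r :: nat
    and gs :: "'a::{finite,field} list"
    and Gs :: "nat set list"
  assumes q: "prime_power q"
    and card_field: "CARD('a) = q ^ N"
    and pos: "N > 0" "m > 0" "k > 0" "r > 0"
    and mN: "m \<le> N" and km: "k \<le> m" and rk: "r < k"
    and gs_len: "length gs = m"
    and gs_indep: "lin_indep_over_Fq q gs"
    and cases: "m mod r = 0 \<or> (\<exists>j. 1 \<le> j \<and> j < r \<and> m mod r = j \<and> k mod r = j)"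
    and Gs_len: "length Gs = m div r + (if m mod r = 0 then 0 else 1)"
    and Gs_card: "\<forall>i<length Gs. card (Gs ! i) = (if i < m div r then r else m mod r)"
    and Gs_disj: "\<forall>i<length Gs. \<forall>i'<length Gs. i \<noteq> i' \<longrightarrow> Gs ! i \<inter> Gs ! i' = {}"
    and Gs_cover: "\<Union> (set Gs) = {..<m}"
  shows "linear_code_dim (m + length Gs) k (local_code Gs (gabidulin q k gs)) \<and>
         int (min_dist (local_code Gs (gabidulin q k gs)))
           = int (m + length Gs) - int k + 2 - ceiling (real k / real r)"
proof -
  obtain e where e: "e > 0" "q = CHAR('a) ^ e" using q_char_power[OF q card_field pos(1)] by blast
  interpret gcode q e N m k gs Gs
    by unfold_locales (use e char_prime_field card_field pos gs_len gs_indep km Gs_disj Gs_cover in auto)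
  define cr where "cr = (k + r - 1) div r"
  have ar: "(\<forall>A \<subseteq> {..<length Gs}. (\<Sum>t\<in>A. card (Gs ! t)) \<le> k - 1 \<longrightarrow> card A \<le> cr - 1)
       \<and> (\<exists>T \<subseteq> {..<length Gs}. (\<Sum>t\<in>T. card (Gs ! t)) \<le> k - 1 \<and> card T = cr - 1)"
    unfolding cr_def by (rule arith_groups[OF pos(4) km rk cases Gs_len Gs_card])
  have md: "min_dist (range lw) = m + length Gs - (k - 1) - (cr - 1)"
    by (rule min_dist_eq) (use ar in auto)
  have crL: "cr - 1 \<le> length Gs"
  proof -
    obtain T where "T \<subseteq> {..<length Gs}" "card T = cr - 1" using ar by blast
    thus ?thesis by (metis card_lessThan card_mono finite_lessThan)
  qed
  have cr1: "cr \<ge> 1" unfolding cr_def using pos(4) rk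
    by (subst less_eq_div_iff_mult_less_eq) auto
  have ie: "int (m + length Gs - (k - 1) - (cr - 1)) = int (m + length Gs) - int k + 2 - int cr"
    using crL cr1 km pos(3) by (simp add: of_nat_diff)
  have c: "ceiling (real k / real r) = int cr" using ceil_div[OF pos(4) pos(3)] unfolding cr_def .
  have "int (min_dist (range lw)) = int (m + length Gs) - int k + 2 - ceiling (real k / real r)"
    by (simp only: md ie c)
  thus ?thesis using lin_dim unfolding LC_eq by blast
qed



end
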